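(* Let $k,h$ be integers with $k\ge1$ and $h\ge k+2$. Let $T^*(k,h)$ be the tree with vertex set $\{x,z\}\cup\{z_1,\dots,z_k\}\cup\{x_{(i,j)}:1\le i,j\le h-1\}\cup\{y_{(i,j)}:1\le i,j\le h-1\}$ and edge set $\{xx_{(i,j)}:1\le i,j\le h-1\}\cup\{x_{(i,j)}y_{(i,j)}:1\le i,j\le h-1\}\cup\{xz,zz_1,\dots,zz_k\}$. Then $\tau(T^*(k,h))=k$ and $\beta_p(T^*(k,h))=h$.
   Context: Two vertices $u,v$ are twins if $N(u)\setminus\{v\}=N(v)\setminus\{u\}$; the twin number $\tau(G)$ is the maximum cardinality of an equivalence class of the twin relation. For a partition $\Pi=\{S_1,\dots,S_m\}$ of $V(G)$, $r(u|\Pi)=(d(u,S_1),\dots,d(u,S_m))$ with $d(u,S)=\min_{w\in S}d(u,w)$; $\Pi$ is locating if $r(u|\Pi)\ne r(v|\Pi)$ for all distinct $u,v$; $\beta_p(G)$ is the minimum size of a locating partition. *)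

theory Defs
  imports Main "HOL-Library.Disjoint_Sets"
begin

definition nbhd :: "'a set \<Rightarrow> ('a \<Rightarrow> 'a \<Rightarrow> bool) \<Rightarrow> 'a \<Rightarrow> 'a set" where
  "nbhd V E u = {w \<in> V. E u w}"

definition twins :: "'a set \<Rightarrow> ('a \<Rightarrow> 'a \<Rightarrow> bool) \<Rightarrow> 'a \<Rightarrow> 'a \<Rightarrow> bool" where
  "twins V E u v \<longleftrightarrow> nbhd V E u - {v} = nbhd V E v - {u}"

definition twin_class :: "'a set \<Rightarrow> ('a \<Rightarrow> 'a \<Rightarrow> bool) \<Rightarrow> 'a \<Rightarrow> 'a set" where
  "twin_class V E u = {v \<in> V. twins V E u v}"

definition twin_number :: "'a set \<Rightarrow> ('a \<Rightarrow> 'a \<Rightarrow> bool) \<Rightarrow> nat" where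
  "twin_number V E = Max ((\<lambda>u. card (twin_class V E u)) ` V)"

definition edge_rel :: "'a set \<Rightarrow> ('a \<Rightarrow> 'a \<Rightarrow> bool) \<Rightarrow> ('a \<times> 'a) set" where
  "edge_rel V E = {(u, v). u \<in> V \<and> v \<in> V \<and> E u v}"

definition gdist :: "'a set \<Rightarrow> ('a \<Rightarrow> 'a \<Rightarrow> bool) \<Rightarrow> 'a \<Rightarrow> 'a \<Rightarrow> nat" where
  "gdist V E u v = (LEAST n. (u, v) \<in> edge_rel V E ^^ n)"

definition setdist :: "'a set \<Rightarrow> ('a \<Rightarrow> 'a \<Rightarrow> bool) \<Rightarrow> 'a \<Rightarrow> 'a set \<Rightarrow> nat" where
  "setdist V E u S = Min ((\<lambda>w. gdist V E u w) ` S)"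

text \<open>The representation r(u|Pi), as a function on the classes of Pi (the ordering
  of the classes is irrelevant for the locating property).\<close>
definition repr :: "'a set \<Rightarrow> ('a \<Rightarrow> 'a \<Rightarrow> bool) \<Rightarrow> 'a set set \<Rightarrow> 'a \<Rightarrow> 'a set \<Rightarrow> nat" where
  "repr V E P u = (\<lambda>S. if S \<in> P then setdist V E u S else 0)"

definition locating_partition :: "'a set \<Rightarrow> ('a \<Rightarrow> 'a \<Rightarrow> bool) \<Rightarrow> 'a set set \<Rightarrow> bool" where
  "locating_partition V E P \<longleftrightarrow> partition_on V P \<and> finite P \<and>
     (\<forall>u\<in>V. \<forall>v\<in>V. u \<noteq> v \<longrightarrow> repr V E P u \<noteq> repr V E P v)"

definition partition_dimension :: "'a set \<Rightarrow> ('a \<Rightarrow> 'a \<Rightarrow> bool) \<Rightarrow> nat" where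
  "partition_dimension V E = (LEAST m. \<exists>P. locating_partition V E P \<and> card P = m)"

datatype tvert = Xv | Zv | Zi nat | XI nat nat | YI nat nat

definition Tstar_V :: "nat \<Rightarrow> nat \<Rightarrow> tvert set" where
  "Tstar_V k h = {Xv, Zv} \<union> Zi ` {1..k}
     \<union> {XI i j | i j. i \<in> {1..h-1} \<and> j \<in> {1..h-1}}
     \<union> {YI i j | i j. i \<in> {1..h-1} \<and> j \<in> {1..h-1}}"

definition Tstar_edges :: "nat \<Rightarrow> nat \<Rightarrow> (tvert \<times> tvert) set" where
  "Tstar_edges k h = {(Xv, XI i j) | i j. i \<in> {1..h-1} \<and> j \<in> {1..h-1}}
     \<union> {(XI i j, YI i j) | i j. i \<in> {1..h-1} \<and> j \<in> {1..h-1}}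
     \<union> {(Xv, Zv)} \<union> {(Zv, Zi l) | l. l \<in> {1..k}}"

definition Tstar_adj :: "nat \<Rightarrow> nat \<Rightarrow> tvert \<Rightarrow> tvert \<Rightarrow> bool" where
  "Tstar_adj k h u v \<longleftrightarrow> (u, v) \<in> Tstar_edges k h \<or> (v, u) \<in> Tstar_edges k h"

end

theory Submission
  imports Defs begin

fun adj :: "nat \<Rightarrow> nat \<Rightarrow> tvert \<Rightarrow> tvert \<Rightarrow> bool" where
  "adj k h Xv Zv = True"
| "adj k h Zv Xv = True"
| "adj k h Xv (XI i j) = (1 \<le> i \<and> i \<le> h-1 \<and> 1 \<le> j \<and> j \<le> h-1)"
| "adj k h (XI i j) Xv = (1 \<le> i \<and> i \<le> h-1 \<and> 1 \<le> j \<and> j \<le> h-1)"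
| "adj k h (XI i j) (YI i' j') = (i = i' \<and> j = j' \<and> 1 \<le> i \<and> i \<le> h-1 \<and> 1 \<le> j \<and> j \<le> h-1)"
| "adj k h (YI i' j') (XI i j) = (i = i' \<and> j = j' \<and> 1 \<le> i \<and> i \<le> h-1 \<and> 1 \<le> j \<and> j \<le> h-1)"
| "adj k h Zv (Zi l) = (1 \<le> l \<and> l \<le> k)"
| "adj k h (Zi l) Zv = (1 \<le> l \<and> l \<le> k)"
| "adj k h _ _ = False"

lemma adj_eq: "Tstar_adj k h u v = adj k h u v"
  by (cases u; cases v; auto simp: Tstar_adj_def Tstar_edges_def)

fun valid :: "nat \<Rightarrow> nat \<Rightarrow> tvert \<Rightarrow> bool" where
  "valid k h Xv = True"
| "valid k h Zv = True"
| "valid k h (Zi l) = (1 \<le> l \<and> l \<le> k)"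
| "valid k h (XI i j) = (1 \<le> i \<and> i \<le> h-1 \<and> 1 \<le> j \<and> j \<le> h-1)"
| "valid k h (YI i j) = (1 \<le> i \<and> i \<le> h-1 \<and> 1 \<le> j \<and> j \<le> h-1)"

lemma V_mem: "v \<in> Tstar_V k h \<longleftrightarrow> valid k h v"
  by (cases v; auto simp: Tstar_V_def)

lemma V_eq: "Tstar_V k h = {Xv, Zv} \<union> Zi ` {1..k} \<union> (\<lambda>(i,j). XI i j) ` ({1..h-1} \<times> {1..h-1})
   \<union> (\<lambda>(i,j). YI i j) ` ({1..h-1} \<times> {1..h-1})"
  by (auto simp: Tstar_V_def)

lemma V_fin: "finite (Tstar_V k h)"
  by (simp add: V_eq)

fun dep :: "tvert \<Rightarrow> nat" where
  "dep Xv = 0" | "dep Zv = 1" | "dep (Zi l) = 2" | "dep (XI i j) = 1" | "dep (YI i j) = 2"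

fun br :: "tvert \<Rightarrow> (nat \<times> nat) option option" where
  "br Xv = None" | "br Zv = Some None" | "br (Zi l) = Some None"
| "br (XI i j) = Some (Some (i,j))" | "br (YI i j) = Some (Some (i,j))"

definition D :: "tvert \<Rightarrow> tvert \<Rightarrow> nat" where
  "D u v = (if u = v then 0 else if br u = None \<or> br v = None \<or> br u \<noteq> br v then dep u + dep v
     else if dep u = 2 \<and> dep v = 2 then 2 else 1)"

lemma D_lip: "adj k h w v \<Longrightarrow> D u v \<le> D u w + 1"
  by (cases w; cases v; cases u; auto simp: D_def)

lemma D_low: "(u, v) \<in> edge_rel V (Tstar_adj k h) ^^ n \<Longrightarrow> D u v \<le> n"
proof (induction n arbitrary: v)
  case 0 then show ?case by (simp add: D_def)
next
  case (Suc n)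
  then obtain w where "(u,w) \<in> edge_rel V (Tstar_adj k h) ^^ n" "(w,v) \<in> edge_rel V (Tstar_adj k h)" by auto
  then show ?case using Suc.IH D_lip[of k h w v u] by (fastforce simp: edge_rel_def adj_eq)
qed


lemma relpow_2': "(a,b) \<in> R \<Longrightarrow> (b,c) \<in> R \<Longrightarrow> (a,c) \<in> R ^^ 2"
  by (metis numeral_2_eq_2 One_nat_def relpow_1 relpow_Suc_I)

lemma D_pos: "u \<noteq> w \<Longrightarrow> 1 \<le> D u w"
  by (cases u; cases w; auto simp: D_def)

lemma arith_aux: fixes m n :: nat assumes "2 \<le> n" "1 \<le> m" "n*n \<le> m*m - (m-1)" shows "n < m"
proof (rule ccontr)
  assume "\<not> n < m" then have mn: "m \<le> n" by simp
  have "m*(m-1) \<le> n*(n-1)" using mn by (intro mult_le_mono) auto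
  moreover have "m*m - (m-1) = m*(m-1) + 1" using assms(2)
    by (cases m) (auto simp: algebra_simps)
  moreover have "n*n = n*(n-1) + n" using assms(1) by (cases n) (auto simp: algebra_simps)
  ultimately show False using assms by linarith
qed

lemma D_XI: "w \<noteq> XI i j \<Longrightarrow> w \<noteq> YI i j \<Longrightarrow> D (XI i j) w = (if w = Xv then 1 else 1 + dep w)"
  by (cases w) (auto simp: D_def)

fun own :: "nat \<Rightarrow> tvert \<Rightarrow> nat" where
  "own h Xv = h" | "own h Zv = h" | "own h (Zi l) = l" | "own h (XI i j) = i" | "own h (YI i j) = j"

context
  fixes k h :: nat
  assumes k1: "k \<ge> 1" and hk: "h \<ge> k + 2"
begin

abbreviation "VV \<equiv> Tstar_V k h"
abbreviation "EE \<equiv> Tstar_adj k h"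
abbreviation "RR \<equiv> edge_rel VV EE"

lemma RR_iff: "(u,v) \<in> RR \<longleftrightarrow> valid k h u \<and> valid k h v \<and> adj k h u v"
  by (simp add: edge_rel_def V_mem adj_eq)

lemma from_X: "valid k h v \<Longrightarrow> (Xv, v) \<in> RR ^^ dep v \<and> (v, Xv) \<in> RR ^^ dep v"
proof (cases v)
  case (Zi l) assume "valid k h v"
  then show ?thesis using Zi by (auto intro!: relpow_2'[of _ Zv] simp: RR_iff)
next
  case (YI i j) assume "valid k h v"
  then show ?thesis using YI by (auto intro!: relpow_2'[of _ "XI i j"] simp: RR_iff)
qed (auto simp: RR_iff)

lemma path: "valid k h u \<Longrightarrow> valid k h v \<Longrightarrow> (u, v) \<in> RR ^^ D u v"
proof -
  assume u: "valid k h u" and v: "valid k h v"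
  show ?thesis
  proof (cases "u = v")
    case True then show ?thesis by (simp add: D_def)
  next
    case ne: False
    show ?thesis
    proof (cases "br u = None \<or> br v = None \<or> br u \<noteq> br v")
      case True
      have "(u, v) \<in> RR ^^ dep u O RR ^^ dep v" using from_X[OF u] from_X[OF v] by blast
      then show ?thesis using True ne by (simp add: D_def relpow_add)
    next
      case False
      then show ?thesis using ne u v
        apply (cases u; cases v; simp add: D_def)
        apply (auto intro!: relpow_2'[of _ Zv] simp: RR_iff)
        done
    qed
  qed
qed

lemma gdist_D: "valid k h u \<Longrightarrow> valid k h v \<Longrightarrow> gdist VV EE u v = D u v"
  unfolding gdist_def
  by (rule Least_equality) (auto intro: path D_low)

lemma setdist_D: "u \<in> VV \<Longrightarrow> S \<subseteq> VV \<Longrightarrow> setdist VV EE u S = Min (D u ` S)"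
  unfolding setdist_def using gdist_D by (auto simp: V_mem intro!: arg_cong[where f=Min] image_cong)

lemma fin_S: "S \<subseteq> VV \<Longrightarrow> finite S" by (rule finite_subset[OF _ V_fin])

lemma sd0: "u \<in> VV \<Longrightarrow> S \<subseteq> VV \<Longrightarrow> u \<in> S \<Longrightarrow> setdist VV EE u S = 0"
  apply (subst setdist_D, assumption+)
  apply (rule Min_eqI)
  using fin_S apply (auto simp: D_def)
  done

lemma sdlow: "u \<in> VV \<Longrightarrow> S \<subseteq> VV \<Longrightarrow> S \<noteq> {} \<Longrightarrow> (\<And>w. w \<in> S \<Longrightarrow> n \<le> D u w) \<Longrightarrow> n \<le> setdist VV EE u S"
  apply (subst setdist_D, assumption+)
  using fin_S by (subst Min_ge_iff) auto

lemma sdup: "u \<in> VV \<Longrightarrow> S \<subseteq> VV \<Longrightarrow> w \<in> S \<Longrightarrow> setdist VV EE u S \<le> D u w"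
  apply (subst setdist_D, assumption+)
  using fin_S by (intro Min_le) auto

lemma sd_pos: "u \<in> VV \<Longrightarrow> S \<subseteq> VV \<Longrightarrow> S \<noteq> {} \<Longrightarrow> u \<notin> S \<Longrightarrow> 1 \<le> setdist VV EE u S"
  by (rule sdlow) (auto, metis D_pos One_nat_def)


lemma tw: "twins VV EE u v \<Longrightarrow> valid k h w \<Longrightarrow> w \<noteq> v \<Longrightarrow> w \<noteq> u \<Longrightarrow> adj k h u w = adj k h v w"
  unfolding twins_def nbhd_def by (auto simp: V_mem adj_eq set_eq_iff) 

lemma h3: "h \<ge> 3" "Suc 0 \<le> h - Suc 0" using k1 hk by simp_all

lemma twins_Z: assumes "valid k h u" "valid k h v" "twins VV EE u v" "u \<noteq> v"
  shows "\<exists>l l'. u = Zi l \<and> v = Zi l'"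
proof (cases u)
  case Xv
  then show ?thesis using assms tw[OF assms(3), of Zv] tw[OF assms(3), of "XI 1 1"] h3
    by (cases v) auto
next
  case Zv
  then show ?thesis using assms tw[OF assms(3), of "Zi 1"] tw[OF assms(3), of Xv] k1
    by (cases v) auto
next
  case (XI i j)
  then show ?thesis using assms tw[OF assms(3), of "YI i j"] tw[OF assms(3), of Xv]
    by (cases v) auto
next
  case (YI i j)
  then show ?thesis using assms tw[OF assms(3), of "XI i j"] tw[OF assms(3), of Xv] tw[OF assms(3), of Zv]
    by (cases v) auto
next
  case (Zi l)
  then show ?thesis using assms tw[OF assms(3), of "XI 1 1"] tw[OF assms(3), of Xv] tw[OF assms(3), of Zv] h3
    by (cases v) auto
qed

lemma tc_sub: assumes "valid k h u"
  shows "twin_class VV EE u \<subseteq> (if \<exists>l. u = Zi l then Zi ` {1..k} else {u})"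
proof
  fix v assume "v \<in> twin_class VV EE u"
  then have v: "valid k h v" "twins VV EE u v" by (auto simp: twin_class_def V_mem)
  show "v \<in> (if \<exists>l. u = Zi l then Zi ` {1..k} else {u})"
  proof (cases "u = v")
    case True then show ?thesis using assms by auto
  next
    case False
    then show ?thesis using twins_Z[OF assms v False] v by auto
  qed
qed

lemma tc_card: assumes "valid k h u" shows "card (twin_class VV EE u) \<le> k"
proof -
  have f: "finite (if \<exists>l. u = Zi l then Zi ` {1..k} else {u})" by auto
  have "card (twin_class VV EE u) \<le> card (if \<exists>l. u = Zi l then Zi ` {1..k} else {u})"
    by (rule card_mono[OF f tc_sub[OF assms]])
  also have "\<dots> \<le> k" using k1 card_image_le[of "{1..k}" Zi] by auto
  finally show ?thesis .
qed

lemma tc_Z1: "Zi ` {1..k} \<subseteq> twin_class VV EE (Zi 1)"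
proof
  fix v assume "v \<in> Zi ` {1..k}"
  then obtain l where l: "v = Zi l" "1 \<le> l" "l \<le> k" by auto
  have n: "\<And>l. 1 \<le> l \<Longrightarrow> l \<le> k \<Longrightarrow> nbhd VV EE (Zi l) = {Zv}"
  proof -
    fix l :: nat assume "1 \<le> l" "l \<le> k"
    then show "nbhd VV EE (Zi l) = {Zv}"
      unfolding nbhd_def apply (auto simp: V_mem adj_eq)
      subgoal for x by (cases x) auto
      done
  qed
  show "v \<in> twin_class VV EE (Zi 1)"
    using l k1 n[of l] n[of 1] by (auto simp: twin_class_def twins_def V_mem)
qed

lemma twin_number_k: "twin_number VV EE = k"
  unfolding twin_number_def
proof (rule Max_eqI)
  show "finite ((\<lambda>u. card (twin_class VV EE u)) ` VV)" using V_fin by simp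
  show "\<And>y. y \<in> (\<lambda>u. card (twin_class VV EE u)) ` VV \<Longrightarrow> y \<le> k"
    using tc_card by (auto simp: V_mem)
  have "k \<le> card (twin_class VV EE (Zi 1))"
  proof -
    have "twin_class VV EE (Zi 1) \<subseteq> VV" by (auto simp: twin_class_def)
    then have "card (Zi ` {1..k}) \<le> card (twin_class VV EE (Zi 1))"
      using card_mono[OF fin_S tc_Z1] by blast
    moreover have "card (Zi ` {1..k}) = k" by (simp add: card_image inj_on_def)
    ultimately show ?thesis by simp
  qed
  then have "card (twin_class VV EE (Zi 1)) = k" using tc_card[of "Zi 1"] k1 by simp
  moreover have "Zi 1 \<in> VV" using k1 by (simp add: V_mem)
  ultimately show "k \<in> (\<lambda>u. card (twin_class VV EE u)) ` VV" by force
qed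


definition cl :: "nat \<Rightarrow> tvert set" where "cl c = {v \<in> VV. own h v = c}"
definition P0 :: "tvert set set" where "P0 = cl ` {1..h}"

lemma own_range: "valid k h v \<Longrightarrow> own h v \<in> {1..h}"
  using hk by (cases v) auto

lemma cl_sub: "cl c \<subseteq> VV" by (auto simp: cl_def)

lemma wit: "c \<in> {1..h} \<Longrightarrow> (if c = h then Xv else XI c 1) \<in> cl c"
  using hk by (auto simp: cl_def V_mem)

lemma cl_ne: "c \<in> {1..h} \<Longrightarrow> cl c \<noteq> {}" using wit by blast

lemma cl_inj: "inj_on cl {1..h}"
proof (rule inj_onI)
  fix a b assume "a \<in> {1..h}" "b \<in> {1..h}" "cl a = cl b"
  then show "a = b" using wit[of a] by (auto simp: cl_def split: if_splits)
qed

lemma P0_part: "partition_on VV P0"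
proof (rule partition_onI)
  show "\<Union> P0 = VV" using own_range by (auto simp: P0_def cl_def V_mem)
  show "\<And>p q. p \<in> P0 \<Longrightarrow> q \<in> P0 \<Longrightarrow> p \<noteq> q \<Longrightarrow> disjnt p q"
    by (auto simp: P0_def cl_def disjnt_def)
  show "{} \<notin> P0" using cl_ne unfolding P0_def by (metis imageE)
qed

lemma P0_card: "card P0 = h" unfolding P0_def using card_image[OF cl_inj] by simp

lemma sdle: "valid k h u \<Longrightarrow> w \<in> cl c \<Longrightarrow> D u w \<le> n \<Longrightarrow> setdist VV EE u (cl c) \<le> n"
  using sdup[OF _ cl_sub] by (fastforce simp: V_mem)

lemma sdge: "valid k h u \<Longrightarrow> c \<in> {1..h} \<Longrightarrow> (\<And>w. valid k h w \<Longrightarrow> own h w = c \<Longrightarrow> n \<le> D u w)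
   \<Longrightarrow> n \<le> setdist VV EE u (cl c)"
  apply (rule sdlow)
  using cl_sub cl_ne apply (auto simp: V_mem)
  apply (auto simp: cl_def V_mem)
  done

lemma XI_in: "1 \<le> i \<Longrightarrow> i \<le> h-1 \<Longrightarrow> 1 \<le> j \<Longrightarrow> j \<le> h-1 \<Longrightarrow> XI i j \<in> cl i"
  by (auto simp: cl_def V_mem)
lemma YI_in: "1 \<le> i \<Longrightarrow> i \<le> h-1 \<Longrightarrow> 1 \<le> j \<Longrightarrow> j \<le> h-1 \<Longrightarrow> YI i j \<in> cl j"
  by (auto simp: cl_def V_mem)

lemma sep: assumes u: "valid k h u" and v: "valid k h v" and ne: "u \<noteq> v"
  shows "\<exists>c\<in>{1..h}. setdist VV EE u (cl c) \<noteq> setdist VV EE v (cl c)"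
proof (cases "own h u = own h v")
  case False
  let ?S = "cl (own h u)"
  have uS: "u \<in> ?S" using u by (simp add: cl_def V_mem)
  moreover have "1 \<le> setdist VV EE v ?S" using v False cl_sub uS
    by (intro sd_pos) (auto simp: V_mem cl_def)
  moreover have "setdist VV EE u ?S = 0" using u by (intro sd0) (auto simp: V_mem cl_sub cl_def)
  ultimately show ?thesis using own_range[OF u] by force
next
  case True
  have hk1: "k < h - 1" "1 \<le> h - 1" "h - 1 \<in> {1..h}" "h \<in> {1..h}" using hk k1 by auto
  have X1: "XI (h-1) 1 \<in> cl (h-1)" using hk1 by (intro XI_in) auto
  have Xcl: "Xv \<in> cl h" "Zv \<in> cl h" by (auto simp: cl_def V_mem)
  show ?thesis
  proof (cases u)
    case Xv
    then obtain "v = Zv" using True v ne hk1 by (cases v) auto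
    have "setdist VV EE u (cl (h-1)) \<le> 1" using Xv X1 by (intro sdle[OF u X1]) (simp add: D_def)
    moreover have "2 \<le> setdist VV EE v (cl (h-1))" using \<open>v = Zv\<close> v hk1
      apply (intro sdge[OF v], simp)
      subgoal for w by (cases w) (auto simp: D_def)
      done
    ultimately show ?thesis using hk1 by (auto intro!: bexI[where x="h-1"])
  next
    case Zv
    then obtain "v = Xv" using True v ne hk1 by (cases v) auto
    have "setdist VV EE v (cl (h-1)) \<le> 1" using \<open>v = Xv\<close> X1 by (intro sdle[OF v X1]) (simp add: D_def)
    moreover have "2 \<le> setdist VV EE u (cl (h-1))" using Zv u hk1
      apply (intro sdge[OF u], simp)
      subgoal for w by (cases w) (auto simp: D_def)
      done
    ultimately show ?thesis using hk1 by (auto intro!: bexI[where x="h-1"])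
  next
    case (Zi l)
    have l3: "3 \<le> setdist VV EE u (cl (h-1))" using Zi u hk1
      apply (intro sdge[OF u], simp)
      subgoal for w by (cases w) (auto simp: D_def)
      done
    have l1: "setdist VV EE u (cl h) \<le> 1" using Zi by (intro sdle[OF u Xcl(2)]) (simp add: D_def)
    show ?thesis
    proof (cases v)
      case (XI i j)
      have "setdist VV EE v (cl (h-1)) \<le> 2" using XI by (intro sdle[OF v X1]) (simp add: D_def)
      then show ?thesis using l3 hk1 by (auto intro!: bexI[where x="h-1"])
    next
      case (YI i j)
      have "2 \<le> setdist VV EE v (cl h)" using YI v hk1
        apply (intro sdge[OF v], simp)
        subgoal for w by (cases w) (auto simp: D_def)
        done
      then show ?thesis using l1 hk1 by (auto intro!: bexI[where x="h"])
    qed (use True ne Zi u hk1 in auto)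
  next
    case (XI i j)
    have x1: "setdist VV EE u (cl h) \<le> 1" using XI by (intro sdle[OF u Xcl(1)]) (simp add: D_def)
    show ?thesis
    proof (cases v)
      case (Zi l)
      have "setdist VV EE u (cl (h-1)) \<le> 2" using XI by (intro sdle[OF u X1]) (simp add: D_def)
      moreover have "3 \<le> setdist VV EE v (cl (h-1))" using Zi v hk1
        apply (intro sdge[OF v], simp)
        subgoal for w by (cases w) (auto simp: D_def)
        done
      ultimately show ?thesis using hk1 by (auto intro!: bexI[where x="h-1"])
    next
      case (YI i' j')
      have "2 \<le> setdist VV EE v (cl h)" using YI v hk1
        apply (intro sdge[OF v], simp)
        subgoal for w by (cases w) (auto simp: D_def)
        done
      then show ?thesis using x1 hk1 by (auto intro!: bexI[where x="h"])
    next
      case (XI i' j')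
      then have ii: "i' = i" "j \<noteq> j'" using True ne \<open>u = XI i j\<close> by auto
      show ?thesis
      proof (cases "j = i")
        case False
        have "setdist VV EE u (cl j) \<le> 1" using XI u \<open>u = XI i j\<close>
          by (intro sdle[OF u YI_in[of i j]]) (auto simp: D_def)
        moreover have "2 \<le> setdist VV EE v (cl j)"
        proof (rule sdge[OF v])
          show "j \<in> {1..h}" using XI v ii False \<open>u = XI i j\<close> u by auto
          fix w assume "valid k h w" "own h w = j"
          then show "2 \<le> D v w" using XI v ii False \<open>u = XI i j\<close> u by (cases w) (auto simp: D_def)
        qed
        ultimately show ?thesis using u \<open>u = XI i j\<close> by (auto intro!: bexI[where x="j"])
      next
        case True
        have "setdist VV EE v (cl j') \<le> 1" using XI v
          by (intro sdle[OF v YI_in[of i' j']]) (auto simp: D_def)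
        moreover have "2 \<le> setdist VV EE u (cl j')"
        proof (rule sdge[OF u])
          show "j' \<in> {1..h}" using XI u ii True \<open>u = XI i j\<close> v by auto
          fix w assume "valid k h w" "own h w = j'"
          then show "2 \<le> D u w" using XI u ii True \<open>u = XI i j\<close> v by (cases w) (auto simp: D_def)
        qed
        ultimately show ?thesis using v XI by (auto intro!: bexI[where x="j'"])
      qed
    qed (use True ne XI u hk1 in auto)
  next
    case (YI i j)
    have y2: "2 \<le> setdist VV EE u (cl h)" using YI u hk1
      apply (intro sdge[OF u], simp)
      subgoal for w by (cases w) (auto simp: D_def)
      done
    show ?thesis
    proof (cases v)
      case (Zi l)
      have "setdist VV EE v (cl h) \<le> 1" using Zi by (intro sdle[OF v Xcl(2)]) (simp add: D_def)
      then show ?thesis using y2 hk1 by (auto intro!: bexI[where x="h"])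
    next
      case (XI i' j')
      have "setdist VV EE v (cl h) \<le> 1" using XI by (intro sdle[OF v Xcl(1)]) (simp add: D_def)
      then show ?thesis using y2 hk1 by (auto intro!: bexI[where x="h"])
    next
      case (YI i' j')
      then have ii: "j' = j" "i \<noteq> i'" using True ne \<open>u = YI i j\<close> by auto
      show ?thesis
      proof (cases "i = j")
        case False
        have "setdist VV EE u (cl i) \<le> 1" using YI u \<open>u = YI i j\<close>
          by (intro sdle[OF u XI_in[of i j]]) (auto simp: D_def)
        moreover have "2 \<le> setdist VV EE v (cl i)"
        proof (rule sdge[OF v])
          show "i \<in> {1..h}" using YI v ii False \<open>u = YI i j\<close> u by auto
          fix w assume "valid k h w" "own h w = i"
          then show "2 \<le> D v w" using YI v ii False \<open>u = YI i j\<close> u by (cases w) (auto simp: D_def)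
        qed
        ultimately show ?thesis using u \<open>u = YI i j\<close> by (auto intro!: bexI[where x="i"])
      next
        case True
        have "setdist VV EE v (cl i') \<le> 1" using YI v
          by (intro sdle[OF v XI_in[of i' j']]) (auto simp: D_def)
        moreover have "2 \<le> setdist VV EE u (cl i')"
        proof (rule sdge[OF u])
          show "i' \<in> {1..h}" using YI u ii True \<open>u = YI i j\<close> v by auto
          fix w assume "valid k h w" "own h w = i'"
          then show "2 \<le> D u w" using YI u ii True \<open>u = YI i j\<close> v by (cases w) (auto simp: D_def)
        qed
        ultimately show ?thesis using v YI by (auto intro!: bexI[where x="i'"])
      qed
    qed (use True ne YI u hk1 in auto)
  qed
qed

lemma P0_loc: "locating_partition VV EE P0"
  unfolding locating_partition_def
proof (intro conjI ballI impI)
  show "partition_on VV P0" by (rule P0_part)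
  show "finite P0" by (simp add: P0_def)
  fix u v assume "u \<in> VV" "v \<in> VV" "u \<noteq> v"
  then have "\<exists>c\<in>{1..h}. setdist VV EE u (cl c) \<noteq> setdist VV EE v (cl c)"
    using sep by (simp add: V_mem)
  then obtain c where c: "c \<in> {1..h}" "setdist VV EE u (cl c) \<noteq> setdist VV EE v (cl c)" by blast
  have "cl c \<in> P0" using c by (simp add: P0_def)
  then show "repr VV EE P0 u \<noteq> repr VV EE P0 v"
    using c by (auto simp: repr_def dest: fun_cong[where x="cl c"])
qed


lemma lower: assumes L: "locating_partition VV EE P" shows "h \<le> card P"
proof -
  have part: "partition_on VV P" and finP: "finite P"
    and loc: "\<And>u v. u \<in> VV \<Longrightarrow> v \<in> VV \<Longrightarrow> u \<noteq> v \<Longrightarrow> repr VV EE P u \<noteq> repr VV EE P v"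
    using L by (auto simp: locating_partition_def)
  have UP: "\<Union>P = VV" using part by (simp add: partition_on_def)
  have dsj: "\<And>S S' v. S \<in> P \<Longrightarrow> S' \<in> P \<Longrightarrow> v \<in> S \<Longrightarrow> v \<in> S' \<Longrightarrow> S = S'"
    using partition_onD2[OF part] unfolding pairwise_def disjnt_def by blast
  have Ssub: "\<And>S. S \<in> P \<Longrightarrow> S \<subseteq> VV" using UP by blast
  have Sne: "\<And>S. S \<in> P \<Longrightarrow> S \<noteq> {}" using partition_onD3[OF part] by blast
  define cls where "cls v = (SOME S. S \<in> P \<and> v \<in> S)" for v
  have cls: "cls v \<in> P \<and> v \<in> cls v" if "v \<in> VV" for v
    unfolding cls_def by (rule someI_ex) (use that UP in blast)
  have clsu: "S = cls v" if "S \<in> P" "v \<in> S" for S v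
    using dsj[OF that(1) _ that(2)] cls[of v] that Ssub by blast
  have inV: "XI i j \<in> VV" "YI i j \<in> VV" if "(i,j) \<in> {1..h-1} \<times> {1..h-1}" for i j
    using that by (auto simp: V_mem)
  have XV: "Xv \<in> VV" by (simp add: V_mem)
  have key: "(i,j) = (i',j')"
    if p: "(i,j) \<in> {1..h-1} \<times> {1..h-1}" and q: "(i',j') \<in> {1..h-1} \<times> {1..h-1}"
    and c1: "cls (XI i j) = cls (XI i' j')"
    and c2: "cls (YI i j) = cls (YI i' j') \<or> (cls (YI i j) = cls (XI i j) \<and> cls (YI i' j') = cls Xv)"
    for i j i' j'
  proof -
    let ?xp = "XI i j" and ?yp = "YI i j" and ?xq = "XI i' j'" and ?yq = "YI i' j'"
    have "setdist VV EE ?xp S = setdist VV EE ?xq S" if S: "S \<in> P" for S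
    proof -
      have SV: "S \<subseteq> VV" using Ssub[OF S] .
      show ?thesis
      proof (cases "?xp \<in> S \<or> ?xq \<in> S")
        case True
        then have "S = cls ?xp \<or> S = cls ?xq" using clsu[OF S] by blast
        then have "S = cls ?xq" using c1 by auto
        then have "?xp \<in> S \<and> ?xq \<in> S" using cls[OF inV(1)[OF p]] cls[OF inV(1)[OF q]] c1 by auto
        then show ?thesis using sd0[OF _ SV] inV[OF p] inV[OF q] by simp
      next
        case nx: False
        show ?thesis
        proof (cases "?yp \<in> S \<or> ?yq \<in> S \<or> Xv \<in> S")
          case True
          have "(?yp \<in> S \<and> ?yq \<in> S) \<or> Xv \<in> S"
          proof -
            have a: "cls ?yp = S" if "?yp \<in> S" using clsu[OF S that] by simp
            have b: "cls ?yq = S" if "?yq \<in> S" using clsu[OF S that] by simp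
            have cp: "?xp \<in> cls ?xp" "?yp \<in> cls ?yp" "?yq \<in> cls ?yq" "Xv \<in> cls Xv"
              using cls[OF inV(1)[OF p]] cls[OF inV(2)[OF p]] cls[OF inV(2)[OF q]] cls[OF XV] by auto
            from True show ?thesis
            proof (elim disjE)
              assume y: "?yp \<in> S"
              then show ?thesis using a[OF y] c2 cp nx by auto
            next
              assume y: "?yq \<in> S"
              then show ?thesis using b[OF y] c2 cp nx by auto
            qed auto
          qed
          then have "setdist VV EE ?xp S \<le> 1 \<and> setdist VV EE ?xq S \<le> 1"
          proof
            assume "?yp \<in> S \<and> ?yq \<in> S"
            then show ?thesis using sdup[OF _ SV, of ?xp ?yp] sdup[OF _ SV, of ?xq ?yq] inV[OF p] inV[OF q]
              by (simp add: D_def)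
          next
            assume "Xv \<in> S"
            then show ?thesis using sdup[OF _ SV, of ?xp Xv] sdup[OF _ SV, of ?xq Xv] inV[OF p] inV[OF q]
              by (simp add: D_def)
          qed
          moreover have "1 \<le> setdist VV EE ?xp S" "1 \<le> setdist VV EE ?xq S"
            using sd_pos[OF _ SV Sne[OF S]] nx inV[OF p] inV[OF q] by auto
          ultimately show ?thesis by linarith
        next
          case False
          have "D ?xp ` S = D ?xq ` S"
          proof (rule image_cong[OF refl])
            fix w assume "w \<in> S"
            then have "w \<noteq> ?xp" "w \<noteq> ?yp" "w \<noteq> ?xq" "w \<noteq> ?yq" using nx False by auto
            then show "D ?xp w = D ?xq w" using D_XI by simp
          qed
          then show ?thesis using setdist_D[OF _ SV] inV[OF p] inV[OF q] by simp
        qed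
      qed
    qed
    then have "repr VV EE P ?xp = repr VV EE P ?xq" by (auto simp: repr_def)
    then have "?xp = ?xq" using loc inV[OF p] inV[OF q] by blast
    then show ?thesis by simp
  qed
  define I where "I = {1..h-1} \<times> {1..h-1::nat}"
  define C where "C = cls Xv"
  define f where "f p = (cls (XI (fst p) (snd p)), cls (YI (fst p) (snd p)))" for p
  define g where "g p = (if fst (f p) = snd (f p) \<and> fst (f p) \<noteq> C then (fst (f p), C) else f p)" for p
  define T where "T = P \<times> P - (\<lambda>A. (A,A)) ` (P - {C})"
  have CP: "C \<in> P" using cls[OF XV] by (simp add: C_def)
  have fP: "f p \<in> P \<times> P" if "p \<in> I" for p
    using cls inV that by (auto simp: f_def I_def mem_Times_iff)
  have gT: "g ` I \<subseteq> T"
  proof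
    fix z assume "z \<in> g ` I"
    then obtain p where p: "p \<in> I" "z = g p" by auto
    show "z \<in> T" using fP[OF p(1)] CP p(2) unfolding T_def g_def by (auto split: if_splits)
  qed
  have ginj: "inj_on g I"
  proof (rule inj_onI)
    fix p q assume p: "p \<in> I" and q: "q \<in> I" and e: "g p = g q"
    obtain i j where pij: "p = (i,j)" by (cases p)
    obtain i' j' where qij: "q = (i',j')" by (cases q)
    have pI: "(i,j) \<in> {1..h-1} \<times> {1..h-1}" and qI: "(i',j') \<in> {1..h-1} \<times> {1..h-1}"
      using p q pij qij by (auto simp: I_def)
    have "(i,j) = (i',j')"
    proof -
      let ?A = "cls (XI i j)" and ?B = "cls (YI i j)" and ?A' = "cls (XI i' j')" and ?B' = "cls (YI i' j')"
      have e': "(if ?A = ?B \<and> ?A \<noteq> C then (?A, C) else (?A, ?B))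
             = (if ?A' = ?B' \<and> ?A' \<noteq> C then (?A', C) else (?A', ?B'))"
      proof -
        have "g p = (if ?A = ?B \<and> ?A \<noteq> C then (?A, C) else (?A, ?B))"
          unfolding g_def f_def pij by simp
        moreover have "g q = (if ?A' = ?B' \<and> ?A' \<noteq> C then (?A', C) else (?A', ?B'))"
          unfolding g_def f_def qij by simp
        ultimately show ?thesis using e by simp
      qed
      show ?thesis
      proof (cases "?A = ?B \<and> ?A \<noteq> C")
        case mp: True
        show ?thesis
        proof (cases "?A' = ?B' \<and> ?A' \<noteq> C")
          case True
          then have "?A = ?A' \<and> ?B = ?B'" using mp e' by (auto split: if_splits)
          then show ?thesis using key[OF pI qI] by blast
        next
          case False
          then have "?A = ?A' \<and> ?B = ?A \<and> ?B' = cls Xv" using mp e' by (auto split: if_splits simp: C_def)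
          then show ?thesis using key[OF pI qI] by blast
        qed
      next
        case np: False
        show ?thesis
        proof (cases "?A' = ?B' \<and> ?A' \<noteq> C")
          case True
          then have "?A' = ?A \<and> ?B' = ?A' \<and> ?B = cls Xv" using np e' by (auto split: if_splits simp: C_def)
          then show ?thesis using key[OF qI pI] by (metis prod.inject)
        next
          case False
          then have "?A = ?A' \<and> ?B = ?B'" using np e' by (auto split: if_splits)
          then show ?thesis using key[OF pI qI] by blast
        qed
      qed
    qed
    then show "p = q" using pij qij by simp
  qed
  have finT: "finite T" using finP by (simp add: T_def)
  have "card I \<le> card T" by (rule card_inj_on_le[OF ginj gT finT])
  moreover have "card I = (h-1)*(h-1)" by (simp add: I_def card_cartesian_product)
  moreover have "card T = card P * card P - (card P - 1)"
  proof -
    have sub: "(\<lambda>A. (A,A)) ` (P - {C}) \<subseteq> P \<times> P" by auto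
    have "card ((\<lambda>A. (A,A)) ` (P - {C})) = card (P - {C})" by (rule card_image) (simp add: inj_on_def)
    also have "\<dots> = card P - 1" using CP finP by simp
    finally show ?thesis unfolding T_def using card_Diff_subset[OF _ sub] finP
      by (simp add: card_cartesian_product)
  qed
  moreover have "1 \<le> card P" using CP finP by (metis One_nat_def Suc_leI card_gt_0_iff empty_iff)
  moreover have "2 \<le> h - 1" using hk k1 by simp
  ultimately have "h - 1 < card P" using arith_aux[of "h-1" "card P"] by simp
  then show ?thesis by simp
qed

end

theorem proposition7:
  fixes k h :: nat
  assumes "k \<ge> 1" and "h \<ge> k + 2"
  shows "twin_number (Tstar_V k h) (Tstar_adj k h) = k
    \<and> partition_dimension (Tstar_V k h) (Tstar_adj k h) = h"
proof
  show "twin_number (Tstar_V k h) (Tstar_adj k h) = k" by (rule twin_number_k[OF assms])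
  show "partition_dimension (Tstar_V k h) (Tstar_adj k h) = h"
    unfolding partition_dimension_def
  proof (rule Least_equality)
    show "\<exists>P. locating_partition (Tstar_V k h) (Tstar_adj k h) P \<and> card P = h"
      using P0_loc[OF assms] P0_card[OF assms] by blast
    show "\<And>m. \<exists>P. locating_partition (Tstar_V k h) (Tstar_adj k h) P \<and> card P = m \<Longrightarrow> h \<le> m"
      using lower[OF assms] by blast
  qed
qed

end
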